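(* For every nonnegative integer $n$, \[ \sum_{k=0}^{2n}\frac{(-1)^k}{\binom{2n}{k}}H_{k}^2 =\frac{1+2n}{2+2n}\bigg\{H_{1+2n}^2-\frac{H_{1+2n}}{1+n} -H_{1+2n}^{\langle2\rangle}+H_{1+n}^{\langle2\rangle}\bigg\}. \]
   Context: For a nonnegative integer $m$, $H_m=\sum_{j=1}^m\frac1j$ and $H_m^{\langle2\rangle}=\sum_{j=1}^m\frac{1}{j^2}$ (both equal to $0$ when $m=0$). *)

theory Defs
  imports "HOL-Analysis.Analysis"
begin

text \<open>Second-order harmonic numbers: H2 m = sum of 1/j^2 for j = 1..m (0 for m = 0).
  First-order harmonic numbers are the library's harm.\<close>
definition harm2 :: "nat \<Rightarrow> real" where
  "harm2 m = (\<Sum>j=1..m. 1 / (real j)^2)"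

end

theory Submission
  imports Defs
begin

definition A :: "nat \<Rightarrow> (nat \<Rightarrow> real) \<Rightarrow> real" where
  "A m f = (\<Sum>k=0..m. (-1)^k * f k / real (m choose k))"

lemma gen1:
  fixes p q X C :: real
  assumes "p * X = q * C" "X > 0" "q > 0" "C > 0"
  shows "1 / X = p / (q * C)"
proof -
  have "p / (q * C) = p / (p * X)" using assms(1) by simp
  moreover have "p \<noteq> 0" using assms by (metis mult_eq_0_iff less_irrefl mult_pos_pos)
  ultimately show ?thesis using assms(2) by simp
qed

lemma gen2:
  fixes a b c :: real
  assumes "a > 0" "b > 0" "c > 0"
  shows "a / b * (b / (a * c)) = 1 / c"
  using assms by (simp add: field_simps)

lemma binom_recip:
  assumes "k \<le> m"
  shows "1 / real (Suc m choose k) + 1 / real (Suc m choose Suc k)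
         = (real m + 2) / ((real m + 1) * real (m choose k))"
proof -
  have h1: "real (Suc k) * real (Suc m choose Suc k) = real (Suc m) * real (m choose k)"
    using Suc_times_binomial[of k m] by (metis of_nat_mult)
  have h2: "real (Suc m - k) * real (Suc m choose k) = real (Suc m) * real (m choose k)"
    using binomial_absorb_comp[of "Suc m" k] by (metis diff_Suc_1 of_nat_mult)
  have pos: "real (m choose k) > 0" using assms by simp
  have e: "real (Suc m - k) = real m + 1 - real k" using assms by (simp add: of_nat_diff)
  have p1: "real (Suc m choose k) > 0" using assms by simp
  have p2: "real (Suc m choose Suc k) > 0" using assms
    by (metis Suc_le_mono of_nat_0_less_iff zero_less_binomial_iff)
  have a1: "1 / real (Suc m choose k) = (real m + 1 - real k) / ((real m + 1) * real (m choose k))"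
    using gen1[OF _ p1 _ pos, of "real m + 1 - real k" "real m + 1"] h2 e by simp
  have a2: "1 / real (Suc m choose Suc k) = (real k + 1) / ((real m + 1) * real (m choose k))"
    using gen1[OF _ p2 _ pos, of "real k + 1" "real m + 1"] h1 by (simp add: add.commute)
  show ?thesis unfolding a1 a2 by (simp add: add_divide_distrib[symmetric])
qed

lemma sbp_gen:
  fixes f u :: "nat \<Rightarrow> real"
  shows "(\<Sum>k=0..m. f k * (u k - u (Suc k)))
     = f 0 * u 0 - f m * u (Suc m) + (\<Sum>k=1..m. (f k - f (k - 1)) * u k)"
proof (induction m)
  case 0 then show ?case by (simp add: algebra_simps)
next
  case (Suc m)
  have "(\<Sum>k=0..Suc m. f k * (u k - u (Suc k))) = (\<Sum>k=0..m. f k * (u k - u (Suc k))) + f (Suc m) * (u (Suc m) - u (Suc (Suc m)))"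
    by simp
  also have "\<dots> = f 0 * u 0 - f (Suc m) * u (Suc (Suc m)) + ((\<Sum>k=1..m. (f k - f (k - 1)) * u k) + (f (Suc m) - f m) * u (Suc m))"
    using Suc by (simp add: algebra_simps)
  also have "(\<Sum>k=1..m. (f k - f (k - 1)) * u k) + (f (Suc m) - f m) * u (Suc m) = (\<Sum>k=1..Suc m. (f k - f (k - 1)) * u k)"
    by simp
  finally show ?case .
qed

lemma SBP:
  "A m f = (real m + 1) / (real m + 2) *
     (f 0 + (-1)^m * f m + (\<Sum>k=1..m. (f k - f (k - 1)) * ((-1)^k / real (Suc m choose k))))"
proof -
  define u where "u k = (-1::real)^k / real (Suc m choose k)" for k
  have pt: "(-1)^k * f k / real (m choose k) = (real m + 1) / (real m + 2) * (f k * (u k - u (Suc k)))"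
    if "k \<in> {0..m}" for k
  proof -
    have k: "k \<le> m" using that by simp
    have "u k - u (Suc k) = (-1)^k * (1 / real (Suc m choose k) + 1 / real (Suc m choose Suc k))"
      unfolding u_def by (simp add: field_simps)
    also have "\<dots> = (-1)^k * ((real m + 2) / ((real m + 1) * real (m choose k)))"
      using binom_recip[OF k] by simp
    finally have D: "u k - u (Suc k) = (-1)^k * ((real m + 2) / ((real m + 1) * real (m choose k)))" .
    have pos: "real (m choose k) > 0" using k by simp
    have "real m + 1 > 0" "real m + 2 > 0" by simp_all
    have "(real m + 1) / (real m + 2) * (f k * D') = f k * (-1)^k * ((real m + 1) / (real m + 2) * ((real m + 2) / ((real m + 1) * real (m choose k))))" if "D' = (-1)^k * ((real m + 2) / ((real m + 1) * real (m choose k)))" for D'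
      unfolding that by (simp only: mult_ac)
    from this[OF D] show ?thesis using gen2[OF _ _ pos, of "real m + 1" "real m + 2"] by simp
  qed
  have "A m f = (real m + 1) / (real m + 2) * (\<Sum>k=0..m. f k * (u k - u (Suc k)))"
    unfolding A_def by (simp add: sum_distrib_left pt)
  also have "\<dots> = (real m + 1) / (real m + 2) * (f 0 * u 0 - f m * u (Suc m) + (\<Sum>k=1..m. (f k - f (k - 1)) * u k))"
    by (simp add: sbp_gen)
  also have "u 0 = 1" by (simp add: u_def)
  also have "u (Suc m) = - ((-1)^m)" by (simp add: u_def)
  finally show ?thesis by (simp add: u_def)
qed

lemma ABS:
  fixes g :: "nat \<Rightarrow> real"
  shows "(\<Sum>k=1..Suc N. (-1)^k * g k / (real k * real (Suc N choose k)))
     = - (1 / (real N + 1)) * A N (\<lambda>j. g (Suc j))"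
proof -
  have "(\<Sum>k=1..Suc N. (-1)^k * g k / (real k * real (Suc N choose k)))
      = (\<Sum>j=0..N. (-1)^(Suc j) * g (Suc j) / (real (Suc j) * real (Suc N choose Suc j)))"
    by (subst sum.shift_bounds_cl_Suc_ivl[symmetric]) simp
  also have "\<dots> = (\<Sum>j=0..N. - (1 / (real N + 1)) * ((-1)^j * g (Suc j) / real (N choose j)))"
  proof (rule sum.cong[OF refl])
    fix j assume "j \<in> {0..N}"
    then have pos: "real (N choose j) > 0" by simp
    have h1: "real (Suc j) * real (Suc N choose Suc j) = (real N + 1) * real (N choose j)"
      using Suc_times_binomial[of j N] by (metis of_nat_mult of_nat_Suc add.commute)
    show "(-1)^(Suc j) * g (Suc j) / (real (Suc j) * real (Suc N choose Suc j)) = - (1 / (real N + 1)) * ((-1)^j * g (Suc j) / real (N choose j))"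
      unfolding h1 using pos by (simp add: field_simps)
  qed
  finally show ?thesis unfolding A_def by (simp add: sum_distrib_left)
qed

lemma nz1 [simp]: "real m + 1 \<noteq> 0" "real m + 2 \<noteq> 0" "1 + real m \<noteq> 0" "2 + real m \<noteq> 0"
  by linarith+

lemma gen3:
  fixes a b x :: real
  assumes "a > 0" "b > 0"
  shows "- (1 / a) * (a / b * x) = - x / b"
  using assms by (simp add: field_simps)

lemma A_one: "A m (\<lambda>_. 1) = (real m + 1) / (real m + 2) * (1 + (-1)^m)"
  using SBP[of m "\<lambda>_. 1"] by simp

lemma last_split:
  fixes h :: "nat \<Rightarrow> real"
  shows "(\<Sum>k=1..Suc m. h k) = (\<Sum>k=1..m. h k) + h (Suc m)"
  by simp

lemma first_split:
  fixes h :: "nat \<Rightarrow> real"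
  shows "(\<Sum>k=0..m. h k) = h 0 + (\<Sum>k=1..m. h k)"
  by (simp add: sum.atLeast_Suc_atMost)

lemma P_val:
  "(\<Sum>k=1..m. (-1)^k * 1 / (real k * real (Suc m choose k)))
    = - (1 + (-1)^m) / (real m + 2) + (-1)^m / (real m + 1)"
proof -
  have "(\<Sum>k=1..Suc m. (-1)^k * 1 / (real k * real (Suc m choose k))) = - (1 / (real m + 1)) * A m (\<lambda>_. 1)"
    using ABS[of "\<lambda>_. 1" m] by simp
  also have "\<dots> = - (1 + (-1)^m) / (real m + 2)"
    unfolding A_one using gen3[of "real m + 1" "real m + 2" "1 + (-1)^m"] by simp
  finally have e: "(\<Sum>k=1..Suc m. (-1)^k * 1 / (real k * real (Suc m choose k))) = - (1 + (-1)^m) / (real m + 2)" .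
  have "(\<Sum>k=1..Suc m. (-1)^k * 1 / (real k * real (Suc m choose k))) = (\<Sum>k=1..m. (-1)^k * 1 / (real k * real (Suc m choose k))) - (-1)^m / (real m + 1)"
    by (simp add: add.commute)
  with e show ?thesis by linarith
qed

lemma gen6:
  fixes x y T :: real
  assumes "x \<noteq> 0" "y \<noteq> 0"
  shows "x / y * T * y / x = T"
  using assms by simp

lemma gen4:
  fixes M s av bv Q P :: real
  assumes "M \<ge> 0" "av = (M+1)/(M+2)*(1 + s/(M+1) + (Q - P))"
    "P = -(1+s)/(M+2) + s/(M+1)" "bv = 1 + Q - s/(M+2)"
  shows "bv = av * (M + 2) / (M + 1) - (1 + 2 * s) / (M + 2)"
proof -
  have p: "M + 1 > 0" "M + 2 > 0" using assms(1) by linarith+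
  have "av * (M + 2) / (M + 1) = 1 + s/(M+1) + (Q - P)"
    unfolding assms(2) using gen6[of "M+1" "M+2"] p by simp
  then have "Q - P = av * (M + 2) / (M + 1) - 1 - s / (M + 1)" by simp
  moreover have "P = - ((1+s)/(M+2)) + s/(M+1)" using assms(3) by (simp add: minus_divide_left)
  ultimately have "Q = av * (M + 2) / (M + 1) - 1 - s / (M + 1) - (1+s)/(M+2) + s/(M+1)"
    by linarith
  then show ?thesis using assms(4) by (simp add: diff_divide_distrib add_divide_distrib)
qed

lemma gen5:
  fixes p q s c :: real
  shows "(1/p - 1/q) * (s/c) = s*(1/p)/c - s*1/(q*c)"
proof -
  have "s*(1/p)/c = (1/p)*(s/c)" "s*1/(q*c) = (1/q)*(s/c)" by simp_all
  then show ?thesis by (simp only: left_diff_distrib)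
qed

lemma rec_a:
  "A (Suc m) (\<lambda>j. 1 / (real j + 1)) = A m (\<lambda>j. 1 / (real j + 1)) * (real m + 2) / (real m + 1)
     - (1 + 2 * (-1)^m) / (real m + 2)"
proof -
  define Q where "Q = (\<Sum>k=1..m. (-1)^k * (1 / (real k + 1)) / real (Suc m choose k))"
  define P where "P = (\<Sum>k=1..m. (-1)^k * 1 / (real k * real (Suc m choose k)))"
  have S1: "A m (\<lambda>j. 1 / (real j + 1)) = (real m + 1) / (real m + 2) *
     (1 + (-1)^m / (real m + 1) + (\<Sum>k=1..m. (1 / (real k + 1) - 1 / real k) * ((-1)^k / real (Suc m choose k))))"
  proof -
    have "(\<Sum>k=1..m. (1 / (real k + 1) - 1 / (real (k - 1) + 1)) * ((-1)^k / real (Suc m choose k)))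
       = (\<Sum>k=1..m. (1 / (real k + 1) - 1 / real k) * ((-1)^k / real (Suc m choose k)))"
      by (rule sum.cong) (auto simp: of_nat_diff)
    then show ?thesis using SBP[of m "\<lambda>j. 1 / (real j + 1)"] by simp
  qed
  have S2: "(\<Sum>k=1..m. (1 / (real k + 1) - 1 / real k) * ((-1)^k / real (Suc m choose k))) = Q - P"
    unfolding Q_def P_def sum_subtractf[symmetric] by (rule sum.cong[OF refl], rule gen5)
  have S3: "A (Suc m) (\<lambda>j. 1 / (real j + 1)) = 1 + Q - (-1)^m / (real m + 2)"
  proof -
    have "A (Suc m) (\<lambda>j. 1 / (real j + 1)) = (\<Sum>k=0..Suc m. (-1)^k * (1 / (real k + 1)) / real (Suc m choose k))"
      unfolding A_def by simp
    also have "\<dots> = 1 + (\<Sum>k=1..Suc m. (-1)^k * (1 / (real k + 1)) / real (Suc m choose k))"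
      by (subst first_split) simp
    also have "\<dots> = 1 + Q + (-1)^(Suc m) * (1 / (real (Suc m) + 1)) / real (Suc m choose Suc m)"
      unfolding Q_def by (subst last_split) simp
    also have "\<dots> = 1 + Q - (-1)^m / (real m + 2)" by (simp add: add.commute)
    finally show ?thesis .
  qed
  show ?thesis
    by (rule gen4[of "real m"]) (use S1 S2 S3 P_val[of m] P_def in \<open>simp_all add: add.commute\<close>)
qed

lemma harm2_Suc: "harm2 (Suc m) = harm2 m + 1 / (real (Suc m))^2"
  unfolding harm2_def by simp

lemma gen7:
  fixes t D :: real
  assumes "t > 0"
  shows "D*(2*t) - 3/(2*t) = 2*t*(D + 1/(2*t)^2 - 1/t^2)"
  using assms by (simp add: field_simps power2_eq_square)

lemma gen8:
  fixes u D :: real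
  assumes "u > 0"
  shows "D*u + 1/u = u*(D + 1/u^2)"
  using assms by (simp add: field_simps power2_eq_square)

lemma gen9:
  fixes y D z :: real
  assumes "y \<noteq> 0"
  shows "y * D * z / y = D * z"
  using assms by simp

lemma a_even: "A (2*n) (\<lambda>j. 1 / (real j + 1)) = (2 * real n + 1) * (harm2 (2*n+1) - harm2 n)"
proof (induction n)
  case 0
  then show ?case by (simp add: A_def harm2_def)
next
  case (Suc n)
  define D where "D = harm2 (2*n+1) - harm2 n"
  define D' where "D' = harm2 (2*n+2) - harm2 (n+1)"
  have t: "real n + 1 > 0" by simp
  have o: "A (Suc (2*n)) (\<lambda>j. 1 / (real j + 1)) = (2 * real n + 2) * D'"
  proof -
    have "A (Suc (2*n)) (\<lambda>j. 1 / (real j + 1)) = A (2*n) (\<lambda>j. 1 / (real j + 1)) * (2 * real n + 2) / (2 * real n + 1) - 3 / (2 * real n + 2)"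
      using rec_a[of "2*n"] by simp
    also have "\<dots> = (2 * real n + 1) * D * (2 * real n + 2) / (2 * real n + 1) - 3 / (2 * real n + 2)"
      unfolding Suc.IH D_def by simp
    also have "\<dots> = D * (2 * real n + 2) - 3 / (2 * real n + 2)"
      using gen9[of "2 * real n + 1" D "2 * real n + 2"] by simp
    also have "\<dots> = D * (2 * (real n + 1)) - 3 / (2 * (real n + 1))" by (simp add: distrib_left)
    also have "\<dots> = 2 * (real n + 1) * (D + 1/(2*(real n + 1))^2 - 1/(real n+1)^2)"
      by (rule gen7[OF t])
    also have "\<dots> = (2 * real n + 2) * D'"
      using harm2_Suc[of "2*n+1"] harm2_Suc[of n] unfolding D_def D'_def by (simp add: algebra_simps)
    finally show ?thesis .
  qed
  have u: "2 * real n + 3 > 0" by simp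
  have "A (2 * Suc n) (\<lambda>j. 1 / (real j + 1)) = A (Suc (Suc (2*n))) (\<lambda>j. 1 / (real j + 1))" by simp
  also have "\<dots> = (2 * real n + 2) * D' * (2 * real n + 3) / (2 * real n + 2) + 1 / (2 * real n + 3)"
    using rec_a[of "Suc (2*n)"] unfolding o by (simp add: add.commute add.left_commute)
  also have "\<dots> = D' * (2 * real n + 3) + 1 / (2 * real n + 3)"
    using gen9[of "2 * real n + 2" D' "2 * real n + 3"] by simp
  also have "\<dots> = (2 * real n + 3) * (D' + 1/(2 * real n + 3)^2)"
    by (rule gen8[OF u])
  also have "\<dots> = (2 * real (Suc n) + 1) * (harm2 (2 * Suc n + 1) - harm2 (Suc n))"
    using harm2_Suc[of "2*n+2"] unfolding D'_def by (simp add: algebra_simps)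
  finally show ?case .
qed

lemma harm_diff: "k \<ge> 1 \<Longrightarrow> (harm k :: real) - harm (k - 1) = 1 / real k"
  by (cases k) (simp_all add: harm_Suc inverse_eq_divide)

lemma harm_Suc': "(harm (Suc k) :: real) = harm k + 1 / (real k + 1)"
  by (simp add: harm_Suc inverse_eq_divide add.commute)

lemma harm_sq_diff: "k \<ge> 1 \<Longrightarrow> (harm k :: real)^2 - (harm (k - 1))^2 = (2 * harm k - 1 / real k) * 1 / real k"
proof -
  assume k: "k \<ge> 1"
  have e: "harm (k - 1) = (harm k :: real) - 1 / real k" using harm_diff[OF k] by simp
  show ?thesis unfolding e by (simp add: power2_eq_square algebra_simps diff_divide_distrib)
qed

lemma gen11:
  fixes p q :: real
  assumes "q > 0"
  shows "2 / (2*q) = 1 / q"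
  using assms by simp

lemma A_H: "A (2*n) harm = (2 * real n + 1) / (2 * real n + 2) * (harm (2*n+1) - 1 / (real n + 1))"
proof -
  have "A (2*n) harm = (real (2*n) + 1) / (real (2*n) + 2) *
     (harm 0 + (-1)^(2*n) * harm (2*n) + (\<Sum>k=1..2*n. (harm k - harm (k - 1)) * ((-1)^k / real (Suc (2*n) choose k))))"
    by (rule SBP)
  also have "(\<Sum>k=1..2*n. (harm k - harm (k - 1)) * ((-1)^k / real (Suc (2*n) choose k)))
      = (\<Sum>k=1..2*n. (-1)^k * 1 / (real k * real (Suc (2*n) choose k)))"
  proof (rule sum.cong[OF refl])
    fix k assume "k \<in> {1..2*n}"
    then have "harm k - harm (k - 1) = (1 / real k :: real)" by (intro harm_diff) simp
    then show "(harm k - harm (k - 1)) * ((-1)^k / real (Suc (2*n) choose k)) = (-1)^k * 1 / (real k * real (Suc (2*n) choose k))"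
      by simp
  qed
  also have "\<dots> = - (1 + 1) / (real (2*n) + 2) + 1 / (real (2*n) + 1)"
    using P_val[of "2*n"] by simp
  also have "- (1 + 1) / (real (2*n) + 2) = - (1 / (real n + 1))"
    using gen11[of "real n + 1"] by (simp add: distrib_left)
  finally show ?thesis using harm_Suc'[of "2*n"] by (simp add: harm_expand)
qed

lemma gen_final:
  fixes p q X Y AH a H H0 h2a h2n hhh :: real
  assumes p: "p > 0" and q: "q > 0"
    and Y: "Y = -(1/p)*(2*AH + a)" and X: "X = Y + (2*H - 1/p)/p"
    and AH: "AH = p/(2*q)*(H - 1/q)" and a: "a = p*(h2a - h2n)"
    and H0: "H0 = H - 1/p" and h: "hhh = h2n + 1/q^2"
  shows "H0^2 + X = H^2 - H/q - h2a + hhh"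
proof -
  have "2*AH = p/q*(H - 1/q)" unfolding AH using q by simp
  then have "Y = -(1/p)*(p/q*(H - 1/q) + p*(h2a - h2n))" unfolding Y a by simp
  also have "\<dots> = -(H - 1/q)/q - (h2a - h2n)" using p
    apply (simp add: field_simps)
    apply (simp add: add_divide_distrib[symmetric])
    done
  finally have Y': "Y = -(H - 1/q)/q - (h2a - h2n)" .
  have B: "H0^2 + (2*H - 1/p)/p = H^2" unfolding H0 using p by (simp add: field_simps power2_eq_square)
  have e: "-(H - 1/q)/q = - (H/q) + 1/q^2" by (simp add: diff_divide_distrib power2_eq_square)
  show ?thesis unfolding X Y' h using B e by linarith
qed

lemma A_lin: "A m (\<lambda>j. c * f j + g j) = c * A m f + A m g"
  unfolding A_def by (simp add: sum.distrib sum_distrib_left add_divide_distrib algebra_simps)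

theorem proposition1:
  fixes n :: nat
  shows "(\<Sum>k=0..2*n. (-1)^k / real (2*n choose k) * (harm k :: real)^2)
    = (1 + 2 * real n) / (2 + 2 * real n) *
      ((harm (1 + 2*n) :: real)^2 - harm (1 + 2*n) / (1 + real n)
       - harm2 (1 + 2*n) + harm2 (1 + n))"
proof -
  define m where "m = 2*n"
  define g where "g k = 2 * harm k - 1 / real k" for k
  define X where "X = (\<Sum>k=1..m. (-1)^k * g k / (real k * real (Suc m choose k)))"
  define Y where "Y = (\<Sum>k=1..Suc m. (-1)^k * g k / (real k * real (Suc m choose k)))"
  have L: "(\<Sum>k=0..2*n. (-1)^k / real (2*n choose k) * (harm k :: real)^2) = A m (\<lambda>k. (harm k)^2)"
    unfolding A_def m_def by (simp add: mult.commute)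
  have T1: "A m (\<lambda>k. (harm k)^2) = (real m + 1) / (real m + 2) * (harm 0 ^ 2 + (-1)^m * harm m ^ 2 +
      (\<Sum>k=1..m. ((harm k)^2 - (harm (k - 1))^2) * ((-1)^k / real (Suc m choose k))))"
    by (rule SBP)
  have T2: "(\<Sum>k=1..m. ((harm k)^2 - (harm (k - 1))^2) * ((-1)^k / real (Suc m choose k))) = X"
    unfolding X_def
  proof (rule sum.cong[OF refl])
    fix k assume "k \<in> {1..m}"
    then have "(harm k :: real)^2 - (harm (k - 1))^2 = (2 * harm k - 1 / real k) * 1 / real k" by (intro harm_sq_diff) simp
    then show "((harm k)^2 - (harm (k - 1))^2) * ((-1)^k / real (Suc m choose k)) = (-1)^k * g k / (real k * real (Suc m choose k))"
      unfolding g_def by simp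
  qed
  have T3: "Y = - (1 / (real m + 1)) * A m (\<lambda>j. g (Suc j))"
    unfolding Y_def by (rule ABS)
  have T4: "Y = X + (-1)^(Suc m) * g (Suc m) / (real (Suc m) * real (Suc m choose Suc m))"
    unfolding Y_def X_def by (rule last_split)
  have T5: "A m (\<lambda>j. g (Suc j)) = 2 * A m harm + A m (\<lambda>j. 1 / (real j + 1))"
  proof -
    have "(\<lambda>j. g (Suc j)) = (\<lambda>j. 2 * harm j + 1 / (real j + 1))"
      unfolding g_def by (rule ext) (simp add: harm_Suc' algebra_simps)
    then show ?thesis by (simp add: A_lin)
  qed
  have ev: "even m" unfolding m_def by simp
  have fin: "A m (\<lambda>k. (harm k)^2) = (2 * real n + 1) / (2 * real n + 2) *
     ((harm (2*n+1))^2 - harm (2*n+1) / (real n + 1) - harm2 (2*n+1) + harm2 (n+1))"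
  proof -
    have "(harm (2*n))^2 + X = (harm (2*n+1))^2 - harm (2*n+1) / (real n + 1) - harm2 (2*n+1) + harm2 (n+1)"
    proof (rule gen_final[where p="2 * real n + 1" and q="real n + 1" and X=X and Y=Y and AH="A m harm" and a="A m (\<lambda>j. 1 / (real j + 1))" and H="harm (2*n+1)" and H0="harm (2*n)" and h2a="harm2 (2*n+1)" and h2n="harm2 n" and hhh="harm2 (n+1)"])
      show "Y = -(1/(2 * real n + 1))*(2 * A m harm + A m (\<lambda>j. 1 / (real j + 1)))"
        using T3 T5 unfolding m_def by simp
      show "X = Y + (2 * harm (2*n+1) - 1/(2 * real n + 1))/(2 * real n + 1)"
      proof -
        have r: "real (Suc (2*n)) = 2 * real n + 1" by simp
        have s1: "(-1::real)^(Suc(2*n)) = -1" by simp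
        have s2: "real (Suc (2*n) choose Suc (2*n)) = 1" by simp
        have s3: "g (Suc (2*n)) = 2 * harm (2*n+1) - 1/(2 * real n + 1)"
          unfolding g_def r by simp
        have "Y = X + (-1) * (2 * harm (2*n+1) - 1/(2 * real n + 1)) / ((2 * real n + 1) * 1)"
          using T4 unfolding m_def s1 s2 s3 r .
        moreover have "(-1) * (2 * harm (2*n+1) - 1/(2 * real n + 1)) / ((2 * real n + 1) * 1)
           = - ((2 * harm (2*n+1) - 1/(2 * real n + 1)) / (2 * real n + 1))"
          by (simp only: mult_minus1 mult_1_right minus_divide_left)
        ultimately show ?thesis by linarith
      qed
      show "A m harm = (2 * real n + 1) / (2 * (real n + 1)) * (harm (2*n+1) - 1 / (real n + 1))"
        using A_H[of n] unfolding m_def by (simp add: distrib_left)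
      show "A m (\<lambda>j. 1 / (real j + 1)) = (2 * real n + 1) * (harm2 (2*n+1) - harm2 n)"
        using a_even[of n] unfolding m_def by simp
      show "harm (2*n) = harm (2*n+1) - 1 / (2 * real n + 1)"
        using harm_Suc'[of "2*n"] by simp
      show "harm2 (n+1) = harm2 n + 1 / (real n + 1)^2"
        using harm2_Suc[of n] by (simp add: add.commute)
    qed simp_all
    then show ?thesis using T1 T2 ev unfolding m_def by (simp add: harm_expand)
  qed
  show ?thesis unfolding L fin by (simp add: add.commute)
qed

end
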